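(* Let $r\ge 3$, $1\le t\le r-2$ and $n\ge 2$ be integers, and let $|X_\ell|=n$ for all $1\le\ell\le r$. Let $\mathcal F\subseteq X_1\times\dots\times X_r$ be a non-trivial $t$-intersecting family such that for every $1\le\ell\le r$, $\mathcal F$ is either $\ell$-shifted or $\ell$-shift-resistant, and such that $\mathcal F$ is not coordinate-wise shifted. Then $$|\mathcal F|\le (t+2)n^{r-t-1}-(t+1)n^{r-t-2}.$$
   Context: Let $X_\ell=[n_\ell]$ for $1\le \ell\le r$. For $A,B\in X_1\times\dots\times X_r$, write $A\cap B=\{\ell:A[\ell]=B[\ell]\}$ ($A[\ell]$ the $\ell$-th coordinate). $\mathcal F$ is $t$-intersecting if $|A\cap B|\ge t$ for all $A,B\in\mathcal F$; $\bigcap\mathcal F$ is the set of coordinates on which all members of $\mathcal F$ agree; a $t$-intersecting $\mathcal F$ is non-trivial if $|\bigcap\mathcal F|<t$. For $1\le\ell\le r$ and $1<j\le n_\ell$, the shift $S^{(\ell)}_j$ acts on $F\in\mathcal F$ by: if $F[\ell]=j$ and the sequence $F'$ obtained from $F$ by replacing its $\ell$-th coordinate by $1$ is not in $\mathcal F$, then $S^{(\ell)}_j(F)=F'$; otherwise $S^{(\ell)}_j(F)=F$; $S^{(\ell)}_j(\mathcal F)=\{S^{(\ell)}_j(F):F\in\mathcal F\}$. $\mathcal F$ is $\ell$-shifted if $S^{(\ell)}_j(\mathcal F)=\mathcal F$ for all $1<j\le n_\ell$, and coordinate-wise shifted if it is $\ell$-shifted for every $\ell$. A non-trivial $t$-intersecting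 family $\mathcal F$ is $\ell$-shift-resistant if there exists $x\in X_\ell\setminus\{1\}$ such that $|\bigcap S^{(\ell)}_x(\mathcal F)|=t$. *)

theory Defs
  imports "HOL-Library.FuncSet"
begin

text \<open>Sequences in X_1 x ... x X_r with X_l = [n] are extensional functions
  on the coordinate set {1..r} with values in {1..n}.\<close>

definition grid :: "nat \<Rightarrow> nat \<Rightarrow> (nat \<Rightarrow> nat) set" where
  "grid r n = PiE {1..r} (\<lambda>_. {1..n})"

definition agree :: "nat \<Rightarrow> (nat \<Rightarrow> nat) \<Rightarrow> (nat \<Rightarrow> nat) \<Rightarrow> nat set" where
  "agree r A B = {l \<in> {1..r}. A l = B l}"

definition t_intersecting :: "nat \<Rightarrow> nat \<Rightarrow> (nat \<Rightarrow> nat) set \<Rightarrow> bool" where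
  "t_intersecting r t F \<longleftrightarrow> (\<forall>A\<in>F. \<forall>B\<in>F. card (agree r A B) \<ge> t)"

definition common :: "nat \<Rightarrow> (nat \<Rightarrow> nat) set \<Rightarrow> nat set" where
  "common r F = {l \<in> {1..r}. \<forall>A\<in>F. \<forall>B\<in>F. A l = B l}"

definition nontrivial_t_intersecting :: "nat \<Rightarrow> nat \<Rightarrow> (nat \<Rightarrow> nat) set \<Rightarrow> bool" where
  "nontrivial_t_intersecting r t F \<longleftrightarrow> t_intersecting r t F \<and> card (common r F) < t"

definition shift1 :: "nat \<Rightarrow> nat \<Rightarrow> (nat \<Rightarrow> nat) set \<Rightarrow> (nat \<Rightarrow> nat) \<Rightarrow> (nat \<Rightarrow> nat)" where
  "shift1 l j F A = (if A l = j \<and> A(l := 1) \<notin> F then A(l := 1) else A)"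

definition shift :: "nat \<Rightarrow> nat \<Rightarrow> (nat \<Rightarrow> nat) set \<Rightarrow> (nat \<Rightarrow> nat) set" where
  "shift l j F = shift1 l j F ` F"

definition l_shifted :: "nat \<Rightarrow> nat \<Rightarrow> (nat \<Rightarrow> nat) set \<Rightarrow> bool" where
  "l_shifted n l F \<longleftrightarrow> (\<forall>j\<in>{2..n}. shift l j F = F)"

definition coord_shifted :: "nat \<Rightarrow> nat \<Rightarrow> (nat \<Rightarrow> nat) set \<Rightarrow> bool" where
  "coord_shifted r n F \<longleftrightarrow> (\<forall>l\<in>{1..r}. l_shifted n l F)"

definition shift_resistant :: "nat \<Rightarrow> nat \<Rightarrow> nat \<Rightarrow> nat \<Rightarrow> (nat \<Rightarrow> nat) set \<Rightarrow> bool" where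
  "shift_resistant r n t l F \<longleftrightarrow> nontrivial_t_intersecting r t F \<and>
     (\<exists>x\<in>{2..n}. card (common r (shift l x F)) = t)"

end

theory Submission
  imports Defs
begin

lemma common_sub: "common r F \<subseteq> {1..r}"
  unfolding common_def by auto

lemma res_analysis:
  assumes nt: "nontrivial_t_intersecting r t F"
    and ct: "card (common r (shift l x F)) = t"
    and x1: "x \<noteq> 1"
  shows "l \<in> common r (shift l x F)"
    and "common r (shift l x F) - {l} \<subseteq> common r F"
    and "\<forall>A\<in>F. A l = 1 \<or> (A l = x \<and> A(l:=1) \<notin> F)"
    and "\<exists>A\<in>F. A l = 1"
    and "\<exists>A\<in>F. A l = x"
proof -
  let ?G = "shift l x F"
  have cF: "card (common r F) < t" using nt unfolding nontrivial_t_intersecting_def by auto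
  have fin: "finite (common r F)"
    using common_sub finite_subset by blast
  have s1k: "\<And>A k. k \<noteq> l \<Longrightarrow> shift1 l x F A k = A k"
    unfolding shift1_def by auto
  have inG: "\<And>A. A \<in> F \<Longrightarrow> shift1 l x F A \<in> ?G" unfolding shift_def by auto
  show sub: "common r ?G - {l} \<subseteq> common r F"
  proof
    fix k assume k: "k \<in> common r ?G - {l}"
    hence k1: "k \<in> {1..r}" "k \<noteq> l" unfolding common_def by auto
    have "\<forall>A\<in>F. \<forall>B\<in>F. A k = B k"
    proof (intro ballI)
      fix A B assume "A \<in> F" "B \<in> F"
      hence "shift1 l x F A k = shift1 l x F B k"
        using k inG unfolding common_def by auto
      thus "A k = B k" using s1k k1 by simp
    qed
    thus "k \<in> common r F" using k1 unfolding common_def by auto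
  qed
  show lG: "l \<in> common r ?G"
  proof (rule ccontr)
    assume "l \<notin> common r ?G"
    hence "common r ?G \<subseteq> common r F" using sub by auto
    hence "card (common r ?G) \<le> card (common r F)" using fin card_mono by blast
    thus False using ct cF by simp
  qed
  have "\<exists>A\<in>F. shift1 l x F A \<noteq> A"
  proof (rule ccontr)
    assume "\<not> ?thesis"
    hence "?G = F" unfolding shift_def by auto
    thus False using ct cF by simp
  qed
  then obtain A0 where A0: "A0 \<in> F" "A0 l = x" "A0(l:=1) \<notin> F"
    unfolding shift1_def by (auto split: if_splits)
  have s0: "shift1 l x F A0 l = 1" using A0 unfolding shift1_def by auto
  show res: "\<forall>A\<in>F. A l = 1 \<or> (A l = x \<and> A(l:=1) \<notin> F)"
  proof
    fix A assume A: "A \<in> F"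
    have "shift1 l x F A l = shift1 l x F A0 l"
      using lG inG[OF A] inG[OF A0(1)] unfolding common_def by blast
    hence "shift1 l x F A l = 1" using s0 by simp
    thus "A l = 1 \<or> (A l = x \<and> A(l:=1) \<notin> F)"
      unfolding shift1_def by (auto split: if_splits)
  qed
  show "\<exists>A\<in>F. A l = x" using A0 by blast
  show "\<exists>A\<in>F. A l = 1"
  proof (rule ccontr)
    assume "\<not> ?thesis"
    hence allx: "\<forall>A\<in>F. A l = x" using res by auto
    have "l \<in> {1..r}" using lG unfolding common_def by auto
    moreover have "\<forall>A\<in>F. \<forall>B\<in>F. A l = B l" using allx by metis
    ultimately have "l \<in> common r F" unfolding common_def by blast
    hence "common r ?G \<subseteq> common r F" using sub by auto
    hence "card (common r ?G) \<le> card (common r F)" using fin card_mono by blast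
    thus False using ct cF by simp
  qed
qed

lemma shifted_close:
  assumes "l_shifted n l F" "F \<subseteq> grid r n" "l \<in> {1..r}" "A \<in> F"
  shows "A(l:=1) \<in> F"
proof (cases "A l = 1")
  case True thus ?thesis using assms(4) by (metis fun_upd_triv)
next
  case False
  have "A \<in> grid r n" using assms by auto
  hence "A l \<in> {1..n}" using assms(3) unfolding grid_def by auto
  hence j: "A l \<in> {2..n}" using False by auto
  hence "shift l (A l) F = F" using assms(1) unfolding l_shifted_def by blast
  hence "shift1 l (A l) F A \<in> F" using assms(4) unfolding shift_def by blast
  thus ?thesis unfolding shift1_def by (auto split: if_splits)
qed

lemma shifted_set:
  assumes "finite S" "S \<subseteq> {1..r}" "\<forall>l\<in>S. l_shifted n l F" "F \<subseteq> grid r n" "A \<in> F"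
  shows "(\<lambda>i. if i \<in> S then 1 else A i) \<in> F"
  using assms
proof (induction S rule: finite_induct)
  case empty thus ?case by simp
next
  case (insert l S)
  have prev: "(\<lambda>i. if i \<in> S then 1 else A i) \<in> F" using insert by auto
  have eq: "(\<lambda>i. if i \<in> insert l S then 1 else A i) = (\<lambda>i. if i \<in> S then 1 else A i)(l:=1)"
    by auto
  show ?case unfolding eq
    by (rule shifted_close[OF _ insert(6) _ prev]) (use insert in auto)
qed

theorem lemma2p3:
  fixes r t n :: nat and F :: "(nat \<Rightarrow> nat) set"
  assumes "r \<ge> 3" and "1 \<le> t" and "t \<le> r - 2" and "n \<ge> 2"
    and "F \<subseteq> grid r n"
    and "nontrivial_t_intersecting r t F"
    and "\<forall>l\<in>{1..r}. l_shifted n l F \<or> shift_resistant r n t l F"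
    and "\<not> coord_shifted r n F"
  shows "int (card F) \<le> int (t + 2) * int n ^ (r - t - 1) - int (t + 1) * int n ^ (r - t - 2)"
proof -
  note nt = assms(6)
  have ext: "\<And>A i. A \<in> F \<Longrightarrow> i \<notin> {1..r} \<Longrightarrow> A i = undefined"
    using assms(5) unfolding grid_def by (auto simp: PiE_def extensional_def)
  have rng: "\<And>A i. A \<in> F \<Longrightarrow> i \<in> {1..r} \<Longrightarrow> A i \<in> {1..n}"
    using assms(5) unfolding grid_def by (auto simp: PiE_def Pi_def)
  obtain L where L: "L \<in> {1..r}" "\<not> l_shifted n L F"
    using assms(8) unfolding coord_shifted_def by blast
  hence "shift_resistant r n t L F" using assms(7) by blast
  then obtain x where x: "x \<in> {2..n}" "card (common r (shift L x F)) = t"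
    unfolding shift_resistant_def by blast
  define T where "T = common r (shift L x F)"
  define D where "D = T - {L}"
  have x1: "x \<noteq> 1" using x by auto
  note RA = res_analysis[OF nt x(2) x1]
  have LT: "L \<in> T" using RA(1) T_def by simp
  have DF: "D \<subseteq> common r F" using RA(2) T_def D_def by simp
  have resL: "\<forall>A\<in>F. A L = 1 \<or> (A L = x \<and> A(L:=1) \<notin> F)" using RA(3) .
  obtain A1 where A1: "A1 \<in> F" "A1 L = 1" using RA(4) by blast
  obtain Ax where Ax: "Ax \<in> F" "Ax L = x" using RA(5) by blast
  have Tsub: "T \<subseteq> {1..r}" using common_sub T_def by simp
  have finT: "finite T" using Tsub finite_subset by blast
  have cardT: "card T = t" using x(2) T_def by simp
  have cardD: "card D = t - 1" using D_def LT cardT finT by simp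
  define R where "R = {1..r} - T"
  have "\<exists>l\<in>R. \<not> l_shifted n l F"
  proof (rule ccontr)
    assume "\<not> ?thesis"
    hence allsh: "\<forall>l\<in>R. l_shifted n l F" by blast
    have fR: "finite R" "R \<subseteq> {1..r}" unfolding R_def by auto
    define A' where "A' = (\<lambda>i. if i \<in> R then 1 else Ax i)"
    define B' where "B' = (\<lambda>i. if i \<in> R then 1 else A1 i)"
    have A'F: "A' \<in> F" unfolding A'_def by (rule shifted_set[OF fR allsh assms(5) Ax(1)])
    have B'F: "B' \<in> F" unfolding B'_def by (rule shifted_set[OF fR allsh assms(5) A1(1)])
    have LR: "L \<notin> R" using LT R_def by simp
    have "A'(L:=1) = B'"
    proof
      fix i
      show "(A'(L:=1)) i = B' i"
      proof (cases "i = L")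
        case True thus ?thesis using LR A1 unfolding B'_def by simp
      next
        case False
        show ?thesis
        proof (cases "i \<in> {1..r}")
          case True
          show ?thesis
          proof (cases "i \<in> R")
            case True thus ?thesis using False unfolding A'_def B'_def by simp
          next
            case nR: False
            hence "i \<in> D" using True False unfolding R_def D_def by auto
            hence "Ax i = A1 i" using DF Ax(1) A1(1) unfolding common_def by blast
            thus ?thesis using False nR unfolding A'_def B'_def by simp
          qed
        next
          case nr: False
          hence "i \<notin> R" unfolding R_def by auto
          thus ?thesis using False nr ext[OF Ax(1) nr] ext[OF A1(1) nr]
            unfolding A'_def B'_def by simp
        qed
      qed
    qed
    moreover have "A' L = x" using LR Ax unfolding A'_def by simp
    ultimately have "A'(L:=1) \<notin> F" using resL A'F x1 by blast
    thus False using B'F \<open>A'(L:=1) = B'\<close> by simp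
  qed
  then obtain l where l: "l \<in> R" "\<not> l_shifted n l F" by blast
  have l1r: "l \<in> {1..r}" using l R_def by auto
  hence "shift_resistant r n t l F" using assms(7) l by blast
  then obtain y where y: "y \<in> {2..n}" "card (common r (shift l y F)) = t"
    unfolding shift_resistant_def by blast
  have y1: "y \<noteq> 1" using y by auto
  have resl: "\<forall>A\<in>F. A l = 1 \<or> (A l = y \<and> A(l:=1) \<notin> F)"
    using res_analysis(3)[OF nt y(2) y1] .
  have lL: "l \<noteq> L" using l LT R_def by auto
  have lD: "l \<notin> D" using l R_def D_def by auto
  have inj: "inj_on (\<lambda>A. A(l:=1)) F"
  proof (rule inj_onI)
    fix A B assume A: "A \<in> F" and B: "B \<in> F" and eq: "A(l:=1) = B(l:=1)"
    show "A = B"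
    proof (cases "A l = B l")
      case True
      thus ?thesis using eq by (metis fun_upd_triv fun_upd_upd)
    next
      case False
      hence "(A l = 1 \<and> B l = y \<and> B(l:=1) \<notin> F) \<or> (B l = 1 \<and> A l = y \<and> A(l:=1) \<notin> F)"
        using resl A B by metis
      thus ?thesis using A B eq by (metis fun_upd_triv)
    qed
  qed
  define V where "V = insert L (insert l D)"
  have VS: "V \<subseteq> {1..r}" using L l1r Tsub unfolding V_def D_def by auto
  have finD: "finite D" using finT D_def by simp
  have cardV: "card V = t + 1" unfolding V_def using lL lD finD cardD LT D_def assms(2)
    by simp
  define Box where "Box c = PiE {1..r} (\<lambda>i. if i \<in> V then {if i = L then c else if i = l then 1 else A1 i} else {1..n})" for c
  have cardBox: "card (Box c) = n ^ (r - t - 1)" for c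
  proof -
    have "card (Box c) = (\<Prod>i\<in>{1..r}. if i \<in> V then 1 else n)"
      unfolding Box_def by (subst card_PiE) (auto intro: prod.cong)
    also have "\<dots> = (\<Prod>i\<in>{1..r} \<inter> -V. n)"
      by (subst prod.If_cases) auto
    also have "\<dots> = n ^ card ({1..r} - V)" by (simp add: Diff_eq)
    also have "card ({1..r} - V) = r - (t + 1)"
      using VS cardV by (simp add: card_Diff_subset finite_subset)
    finally show ?thesis by simp
  qed
  have finB: "finite (Box c)" for c unfolding Box_def by (rule finite_PiE) auto
  have imgsub: "(\<lambda>A. A(l:=1)) ` {A\<in>F. A L = c} \<subseteq> Box c" for c
  proof
    fix Z assume "Z \<in> (\<lambda>A. A(l:=1)) ` {A\<in>F. A L = c}"
    then obtain A where A: "A \<in> F" "A L = c" and Z: "Z = A(l:=1)" by blast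
    have AD: "A i = A1 i" if "i \<in> D" for i
      using that DF A(1) A1(1) unfolding common_def by blast
    have Ar: "i \<in> {1..r} \<Longrightarrow> A i \<in> {1..n}" for i using rng A(1) by blast
    have Ae: "i \<notin> {1..r} \<Longrightarrow> A i = undefined" for i using ext A(1) by blast
    have "Z i \<in> (if i \<in> V then {if i = L then c else if i = l then 1 else A1 i} else {1..n})"
      if i: "i \<in> {1..r}" for i
    proof (cases "i = l")
      case True thus ?thesis unfolding Z V_def using lL by simp
    next
      case nl: False
      show ?thesis
      proof (cases "i = L")
        case True thus ?thesis unfolding Z V_def using nl A(2) by simp
      next
        case nL: False
        show ?thesis
        proof (cases "i \<in> D")
          case True thus ?thesis unfolding Z V_def using nl nL AD by simp
        next
          case False thus ?thesis unfolding Z V_def using nl nL Ar[OF i] by simp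
        qed
      qed
    qed
    moreover have "Z \<in> extensional {1..r}"
      unfolding extensional_def Z using Ae l1r by auto
    ultimately show "Z \<in> Box c" unfolding Box_def by (simp add: PiE_iff)
  qed
  have cardpart: "card {A\<in>F. A L = c} \<le> n ^ (r - t - 1)" for c
  proof -
    have "inj_on (\<lambda>A. A(l:=1)) {A\<in>F. A L = c}" by (rule inj_on_subset[OF inj]) auto
    hence "card {A\<in>F. A L = c} \<le> card (Box c)"
      by (rule card_inj_on_le[OF _ imgsub[of c] finB])
    thus ?thesis using cardBox by simp
  qed
  have "F \<subseteq> {A\<in>F. A L = 1} \<union> {A\<in>F. A L = x}" using resL by auto
  moreover have "finite ({A\<in>F. A L = 1} \<union> {A\<in>F. A L = x})"
  proof -
    have "finite (grid r n)" unfolding grid_def by (rule finite_PiE) auto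
    hence "finite F" using assms(5) by (rule finite_subset[rotated])
    thus ?thesis by simp
  qed
  ultimately have "card F \<le> card ({A\<in>F. A L = 1} \<union> {A\<in>F. A L = x})"
    by (rule card_mono[rotated])
  also have "\<dots> \<le> card {A\<in>F. A L = 1} + card {A\<in>F. A L = x}" by (rule card_Un_le)
  finally have cF: "card F \<le> 2 * n ^ (r - t - 1)" using cardpart[of 1] cardpart[of x] by linarith
  define k where "k = r - t - 2"
  have e: "r - t - 1 = Suc k" using assms(3) assms(1) k_def by simp
  define N where "N = int n ^ k"
  have N0: "N \<ge> 0" unfolding N_def by simp
  have tn: "int (t + 1) \<le> int t * int n" using assms(2) assms(4)
  proof -
    have "int t * 2 \<le> int t * int n" using assms(4) by (intro mult_left_mono) auto
    thus ?thesis using assms(2) by linarith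
  qed
  have "int (t + 1) * N \<le> int t * int n * N" using mult_right_mono[OF tn N0] .
  hence "2 * (int n * N) \<le> int (t + 2) * (int n * N) - int (t + 1) * N"
    by (simp add: algebra_simps)
  moreover have "int (card F) \<le> 2 * (int n * N)" using cF unfolding e N_def
    by (metis of_nat_le_iff of_nat_mult of_nat_numeral of_nat_power power_Suc)
  ultimately show ?thesis unfolding e k_def[symmetric] N_def by (simp add: power_Suc)
qed

end
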